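(* Consider a human–algorithm system (as defined in the context) with $A\le H$, let $s$ be a weighting function for $c$, and write $s_i=s(a_i,h_i)$ and $C=\sum_{i=1}^N p_i\,c(a_i,h_i)$. Let $\epsilon_a=\max_i a_i-\min_i a_i$ and $\epsilon_h=\max_i h_i-\min_i h_i$ be the loss disparities of the algorithm and of the unaided human. If the system exhibits complementarity, then $$A-C+(H-A)\sum_{i=1}^N p_i\,s_i<\epsilon_a+\epsilon_h.$$
   Context: A human–algorithm system consists of: an integer $N\ge1$ (number of regimes); probabilities $p_1,\dots,p_N\ge 0$ with $\sum_i p_i=1$; algorithmic losses $a_1,\dots,a_N\ge 0$ and unaided-human losses $h_1,\dots,h_N\ge0$; and a combining function $c:[0,\infty)^2\to\mathbb{R}$ satisfying $\min(a,h)\le c(a,h)\le\max(a,h)$ for all $a,h\ge0$, where $c(a_i,h_i)$ is the loss of the combined system in regime $i$. Write $A=\sum_i p_i a_i$ and $H=\sum_i p_i h_i$. The system exhibits complementarity if $\sum_{i=1}^N p_i\,c(a_i,h_i)<\min(A,H)$. A weighting function for $c$ is a function $s:[0,\infty)^2\to[0,1]$ with $c(a,h)=(1-s(a,h))a+s(a,h)h$ for all $a,h\ge0$. *)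

theory Defs
  imports Main "HOL.Real"
begin

definition is_combining_function :: "(real \<Rightarrow> real \<Rightarrow> real) \<Rightarrow> bool" where
  "is_combining_function c \<longleftrightarrow>
     (\<forall>a h. a \<ge> 0 \<longrightarrow> h \<ge> 0 \<longrightarrow> min a h \<le> c a h \<and> c a h \<le> max a h)"

definition is_weighting_function ::
  "(real \<Rightarrow> real \<Rightarrow> real) \<Rightarrow> (real \<Rightarrow> real \<Rightarrow> real) \<Rightarrow> bool" where
  "is_weighting_function c s \<longleftrightarrow>
     (\<forall>a h. a \<ge> 0 \<longrightarrow> h \<ge> 0 \<longrightarrow>
        0 \<le> s a h \<and> s a h \<le> 1 \<and> c a h = (1 - s a h) * a + s a h * h)"

definition complementarity ::
  "nat \<Rightarrow> (nat \<Rightarrow> real) \<Rightarrow> (nat \<Rightarrow> real) \<Rightarrow> (nat \<Rightarrow> real) \<Rightarrow> (real \<Rightarrow> real \<Rightarrow> real) \<Rightarrow> bool" where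
  "complementarity N p a h c \<longleftrightarrow>
     (\<Sum>i=1..N. p i * c (a i) (h i))
       < min (\<Sum>i=1..N. p i * a i) (\<Sum>i=1..N. p i * h i)"

end

theory Submission
  imports Defs
begin

theorem lemma9:
  fixes N :: nat and p a h :: "nat \<Rightarrow> real" and c s :: "real \<Rightarrow> real \<Rightarrow> real"
  assumes "N \<ge> 1"
    and "\<forall>i\<in>{1..N}. p i \<ge> 0" and "(\<Sum>i=1..N. p i) = 1"
    and "\<forall>i\<in>{1..N}. a i \<ge> 0" and "\<forall>i\<in>{1..N}. h i \<ge> 0"
    and "is_combining_function c"
    and "(\<Sum>i=1..N. p i * a i) \<le> (\<Sum>i=1..N. p i * h i)"
    and "is_weighting_function c s"
    and "complementarity N p a h c"
  shows "(\<Sum>i=1..N. p i * a i) - (\<Sum>i=1..N. p i * c (a i) (h i))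
           + ((\<Sum>i=1..N. p i * h i) - (\<Sum>i=1..N. p i * a i))
             * (\<Sum>i=1..N. p i * s (a i) (h i))
         < (Max (a ` {1..N}) - Min (a ` {1..N})) + (Max (h ` {1..N}) - Min (h ` {1..N}))"
proof -
  define I where "I = {1..N}"
  define A where "A = (\<Sum>i\<in>I. p i * a i)"
  define H where "H = (\<Sum>i\<in>I. p i * h i)"
  define C where "C = (\<Sum>i\<in>I. p i * c (a i) (h i))"
  define S where "S = (\<Sum>i\<in>I. p i * s (a i) (h i))"
  define ea where "ea = Max (a ` I) - Min (a ` I)"
  define eh where "eh = Max (h ` I) - Min (h ` I)"
  have fin: "finite I" and ne: "I \<noteq> {}" using assms(1) by (auto simp: I_def)
  have p0: "\<And>i. i \<in> I \<Longrightarrow> p i \<ge> 0" using assms(2) by (auto simp: I_def)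
  have p1: "(\<Sum>i\<in>I. p i) = 1" using assms(3) by (simp add: I_def)
  have s01: "\<And>i. i \<in> I \<Longrightarrow> 0 \<le> s (a i) (h i) \<and> s (a i) (h i) \<le> 1 \<and>
      c (a i) (h i) = (1 - s (a i) (h i)) * a i + s (a i) (h i) * h i"
    using assms(4,5,8) by (auto simp: I_def is_weighting_function_def)
  have AH: "A \<le> H" using assms(7) by (simp add: A_def H_def I_def)
  have comp: "C < min A H" using assms(9) by (simp add: complementarity_def A_def H_def C_def I_def)
  have Cexp: "C = A + (\<Sum>i\<in>I. p i * s (a i) (h i) * (h i - a i))"
    unfolding C_def A_def sum.distrib[symmetric]
    by (rule sum.cong) (auto simp: s01 algebra_simps)
  have minA: "Min (a ` I) \<le> A"
  proof -
    have "(\<Sum>i\<in>I. p i * Min (a ` I)) \<le> A" unfolding A_def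
      by (rule sum_mono) (auto intro!: mult_left_mono p0 simp: fin)
    thus ?thesis by (simp add: sum_distrib_right[symmetric] p1)
  qed
  have maxH: "H \<le> Max (h ` I)"
  proof -
    have "H \<le> (\<Sum>i\<in>I. p i * Max (h ` I))" unfolding H_def
      by (rule sum_mono) (auto intro!: mult_left_mono p0 simp: fin)
    thus ?thesis by (simp add: sum_distrib_right[symmetric] p1)
  qed
  have LHS: "A - C + (H - A) * S = (\<Sum>i\<in>I. p i * s (a i) (h i) * ((a i - A) + (H - h i)))"
  proof -
    have "(\<Sum>i\<in>I. p i * s (a i) (h i) * ((a i - A) + (H - h i)))
       = (\<Sum>i\<in>I. - (p i * s (a i) (h i) * (h i - a i)) + p i * s (a i) (h i) * (H - A))"
      by (rule sum.cong) (simp_all add: algebra_simps)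
    also have "\<dots> = - (\<Sum>i\<in>I. p i * s (a i) (h i) * (h i - a i)) + S * (H - A)"
      by (simp only: sum.distrib sum_negf S_def sum_distrib_right)
    finally show ?thesis using Cexp by (simp add: algebra_simps)
  qed
  have bound: "A - C + (H - A) * S \<le> S * (ea + eh)"
  proof -
    have "A - C + (H - A) * S \<le> (\<Sum>i\<in>I. p i * s (a i) (h i) * (ea + eh))"
      unfolding LHS
    proof (rule sum_mono)
      fix i assume i: "i \<in> I"
      have "a i \<le> Max (a ` I)" "Min (h ` I) \<le> h i" using i fin by auto
      hence "(a i - A) + (H - h i) \<le> ea + eh" using minA maxH by (simp add: ea_def eh_def)
      moreover have "p i * s (a i) (h i) \<ge> 0" using p0[OF i] s01[OF i] by simp
      ultimately show "p i * s (a i) (h i) * ((a i - A) + (H - h i)) \<le> p i * s (a i) (h i) * (ea + eh)"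
        by (rule mult_left_mono)
    qed
    thus ?thesis by (simp add: S_def sum_distrib_right)
  qed
  have S1: "S < 1"
  proof (rule ccontr)
    assume "\<not> S < 1"
    hence "(\<Sum>i\<in>I. p i * (1 - s (a i) (h i))) \<le> 0"
    proof -
      have "(\<Sum>i\<in>I. p i * (1 - s (a i) (h i))) = (\<Sum>i\<in>I. p i - p i * s (a i) (h i))"
        by (rule sum.cong) (simp_all add: right_diff_distrib)
      also have "\<dots> = 1 - S" by (simp only: sum_subtractf p1 S_def)
      finally show ?thesis using \<open>\<not> S < 1\<close> by simp
    qed
    moreover have nn: "\<And>i. i \<in> I \<Longrightarrow> p i * (1 - s (a i) (h i)) \<ge> 0"
    proof -
      fix i assume i: "i \<in> I"
      have "s (a i) (h i) \<le> 1" using s01[OF i] by blast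
      thus "p i * (1 - s (a i) (h i)) \<ge> 0" using p0[OF i] by simp
    qed
    moreover have "0 \<le> (\<Sum>i\<in>I. p i * (1 - s (a i) (h i)))" by (rule sum_nonneg) (rule nn)
    ultimately have s0: "(\<Sum>i\<in>I. p i * (1 - s (a i) (h i))) = 0" by linarith
    have z: "\<And>i. i \<in> I \<Longrightarrow> p i * (1 - s (a i) (h i)) = 0"
    proof -
      fix i assume i: "i \<in> I"
      have "\<forall>i\<in>I. p i * (1 - s (a i) (h i)) = 0"
        using iffD1[OF sum_nonneg_eq_0_iff[OF fin] s0] nn by blast
      thus "p i * (1 - s (a i) (h i)) = 0" using i by blast
    qed
    have "C = H" unfolding C_def H_def
    proof (rule sum.cong)
      fix i assume i: "i \<in> I"
      have ce: "c (a i) (h i) = (1 - s (a i) (h i)) * a i + s (a i) (h i) * h i"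
        using s01[OF i] by blast
      have "p i * c (a i) (h i) = p i * (1 - s (a i) (h i)) * (a i - h i) + p i * h i"
        unfolding ce by (simp add: algebra_simps)
      thus "p i * c (a i) (h i) = p i * h i" using z[OF i] by simp
    qed simp
    thus False using comp AH by simp
  qed
  have E: "ea + eh > 0"
  proof (rule ccontr)
    assume "\<not> ea + eh > 0"
    moreover have "Min (a ` I) \<le> Max (a ` I)" "Min (h ` I) \<le> Max (h ` I)" using fin ne by auto
    ultimately have ea0: "Max (a ` I) = Min (a ` I)" and eh0: "Max (h ` I) = Min (h ` I)"
      by (auto simp: ea_def eh_def)
    obtain j where j: "j \<in> I" using ne by blast
    have ai: "\<And>i. i \<in> I \<Longrightarrow> a i = Min (a ` I)"
    proof -
      fix i assume i: "i \<in> I"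
      have "a i \<le> Max (a ` I)" "Min (a ` I) \<le> a i" using i fin by auto
      thus "a i = Min (a ` I)" using ea0 by linarith
    qed
    have hi: "\<And>i. i \<in> I \<Longrightarrow> h i = Min (h ` I)"
    proof -
      fix i assume i: "i \<in> I"
      have "h i \<le> Max (h ` I)" "Min (h ` I) \<le> h i" using i fin by auto
      thus "h i = Min (h ` I)" using eh0 by linarith
    qed
    have "A = Min (a ` I)" unfolding A_def using ai p1
      by (simp add: sum_distrib_right[symmetric])
    moreover have "H = Min (h ` I)" unfolding H_def using hi p1
      by (simp add: sum_distrib_right[symmetric])
    moreover have "C = c (Min (a ` I)) (Min (h ` I))" unfolding C_def using ai hi p1
      by (simp add: sum_distrib_right[symmetric])
    moreover have "min (a j) (h j) \<le> c (a j) (h j)"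
      using assms(4,5,6) j by (auto simp: is_combining_function_def I_def)
    moreover have "a j = Min (a ` I)" "h j = Min (h ` I)" using ai hi j by auto
    ultimately show False using comp by (simp add: min_def split: if_splits)
  qed
  have "S * (ea + eh) < ea + eh" using S1 E by simp
  with bound have "A - C + (H - A) * S < ea + eh" by linarith
  thus ?thesis by (simp add: A_def H_def C_def S_def ea_def eh_def I_def)
qed

end
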